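(* Let $\{(\phi^n,\mu^n,R^n,\xi^n)\}$ be generated by Scheme 1B and set $M:=R^0=\sqrt{E[\phi_{in}]}$. Then for all $n\ge0$: $0<R^{n+1}\le R^n\le M$ and $0<\xi^{n+1}\le \frac{M}{\sqrt{c_0}}$.
   Context: Standing setup: $\Omega\subset\mathbb{R}^d$ ($d=2,3$) is a bounded domain with smooth boundary and outward unit normal $\mathbf{n}$; $\|\cdot\|_0$ is the $L^2(\Omega)$ norm. Let $\lambda\ge 0$, $H(s)=\frac14(s^2-1)^2$, $h(s)=H'(s)=s^3-s$. Fix $c_0>0$ and define $E[\phi]=\int_\Omega\big(\tfrac12|\nabla\phi|^2+\tfrac{\lambda}{2}\phi^2+H(\phi)\big)dx+c_0$ (so $E[\phi]\ge c_0$). Time step $\Delta t>0$. Set $\phi^0=\phi_{in}$, $\mu^0=-\Delta\phi^0+\lambda\phi^0+h(\phi^0)$, $R^0=\sqrt{E[\phi^0]}$, $\xi^0=1$. Scheme 1B: for $n\ge0$, solve $\frac{\phi^{n+1}-\phi^n}{\Delta t}=\Delta\mu^{n+1}$, $\mu^{n+1}=-\Delta\phi^{n+1}+\lambda\phi^{n+1}+|\xi^{n}|^2h(\phi^n)$ with $\nabla\phi^{n+1}\cdot\mathbf{n}=\nabla\mu^{n+1}\cdot\mathbf{n}=0$ on $\partial\Omega$; then $\frac{R^{n+1}-R^n}{\Delta t}=-\frac{\xi^{n+1}}{2\sqrt{E[\phi^{n+1}]}}\int_\Omega|\nabla\mu^{n+1}|^2dx$ with $\xi^{n+1}=R^{n+1}/\sqrt{E[\phi^{n+1}]}$.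 *)

theory Defs
  imports "HOL-Analysis.Analysis"
begin

definition pderiv_i :: "'d::finite \<Rightarrow> (real^'d \<Rightarrow> real) \<Rightarrow> real^'d \<Rightarrow> real" where
  "pderiv_i i f x = frechet_derivative f (at x) (axis i 1)"

definition grad :: "(real^'d::finite \<Rightarrow> real) \<Rightarrow> real^'d \<Rightarrow> real^'d" where
  "grad f x = (\<chi> i. pderiv_i i f x)"

definition lap :: "(real^'d::finite \<Rightarrow> real) \<Rightarrow> real^'d \<Rightarrow> real" where
  "lap f x = (\<Sum>i\<in>UNIV. pderiv_i i (pderiv_i i f) x)"

definition Hpot :: "real \<Rightarrow> real" where
  "Hpot s = (s^2 - 1)^2 / 4"

definition hpot :: "real \<Rightarrow> real" where
  "hpot s = s^3 - s"

definition energy :: "(real^'d::finite) set \<Rightarrow> real \<Rightarrow> real \<Rightarrow> (real^'d \<Rightarrow> real) \<Rightarrow> real" where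
  "energy \<Omega> lam c0 \<phi> =
     integral \<Omega> (\<lambda>x. (norm (grad \<phi> x))^2 / 2 + lam / 2 * (\<phi> x)^2 + Hpot (\<phi> x)) + c0"

end

theory Submission
  imports Defs
begin

lemma integral_nonneg_any:
  fixes f :: "'n::euclidean_space \<Rightarrow> real"
  assumes "\<And>x. 0 \<le> f x"
  shows "0 \<le> integral S f"
proof (cases "f integrable_on S")
  case True then show ?thesis using integral_nonneg assms by blast
next
  case False then show ?thesis by (simp add: not_integrable_integral)
qed

lemma energy_ge:
  assumes "lam \<ge> 0"
  shows "energy \<Omega> lam c0 \<phi> \<ge> c0"
proof -
  have "0 \<le> integral \<Omega> (\<lambda>x. (norm (grad \<phi> x))^2 / 2 + lam / 2 * (\<phi> x)^2 + Hpot (\<phi> x))"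
    by (rule integral_nonneg_any) (use assms in \<open>auto simp: Hpot_def\<close>)
  then show ?thesis unfolding energy_def by simp
qed

lemma step_lemma:
  fixes a b S I dt :: real
  assumes a: "a > 0" and S: "S > 0" and I: "I \<ge> 0" and dt: "dt > 0"
    and eq: "(b - a) / dt = - ((b / S) / (2 * S)) * I"
  shows "0 < b \<and> b \<le> a"
proof -
  have "b - a = - dt * b * I / (2 * S * S)"
    using eq dt S by (simp add: field_simps)
  hence e: "b * (1 + dt * I / (2 * S * S)) = a" using S by (simp add: field_simps)
  have p: "1 \<le> 1 + dt * I / (2 * S * S)" using dt I S by simp
  define c where "c = 1 + dt * I / (2 * S * S)"
  have c1: "c \<ge> 1" using p c_def by simp
  have bc: "b = a / c" using e c1 unfolding c_def[symmetric] by (simp add: field_simps)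
  have "b > 0" using bc a c1 by simp
  moreover have "b \<le> a" using bc a c1 by (simp add: divide_le_eq)
  ultimately show ?thesis by simp
qed

theorem mainTheorem7:
  fixes \<Omega> :: "(real^'d::finite) set"
    and nu :: "real^'d \<Rightarrow> real^'d"
    and lam c0 dt :: real
    and \<phi> \<mu> :: "nat \<Rightarrow> real^'d \<Rightarrow> real"
    and R \<xi> :: "nat \<Rightarrow> real"
  assumes dim: "CARD('d) = 2 \<or> CARD('d) = 3"
    and dom: "open \<Omega>" "connected \<Omega>" "bounded \<Omega>" "\<Omega> \<noteq> {}"
    and normal: "\<forall>x\<in>frontier \<Omega>. norm (nu x) = 1"
    and lam: "lam \<ge> 0" and c0: "c0 > 0" and dt: "dt > 0"
    and init_mu: "\<forall>x\<in>\<Omega>. \<mu> 0 x = - lap (\<phi> 0) x + lam * \<phi> 0 x + hpot (\<phi> 0 x)"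
    and init_R: "R 0 = sqrt (energy \<Omega> lam c0 (\<phi> 0))"
    and init_xi: "\<xi> 0 = 1"
    and eq_phi: "\<forall>n. \<forall>x\<in>\<Omega>. (\<phi> (Suc n) x - \<phi> n x) / dt = lap (\<mu> (Suc n)) x"
    and eq_mu: "\<forall>n. \<forall>x\<in>\<Omega>. \<mu> (Suc n) x =
                  - lap (\<phi> (Suc n)) x + lam * \<phi> (Suc n) x + (\<bar>\<xi> n\<bar>)^2 * hpot (\<phi> n x)"
    and bc_phi: "\<forall>n. \<forall>x\<in>frontier \<Omega>. grad (\<phi> (Suc n)) x \<bullet> nu x = 0"
    and bc_mu: "\<forall>n. \<forall>x\<in>frontier \<Omega>. grad (\<mu> (Suc n)) x \<bullet> nu x = 0"
    and eq_R: "\<forall>n. (R (Suc n) - R n) / dt =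
                 - (\<xi> (Suc n) / (2 * sqrt (energy \<Omega> lam c0 (\<phi> (Suc n)))))
                   * integral \<Omega> (\<lambda>x. (norm (grad (\<mu> (Suc n)) x))^2)"
    and eq_xi: "\<forall>n. \<xi> (Suc n) = R (Suc n) / sqrt (energy \<Omega> lam c0 (\<phi> (Suc n)))"
  shows "\<forall>n. 0 < R (Suc n) \<and> R (Suc n) \<le> R n \<and> R n \<le> R 0
             \<and> 0 < \<xi> (Suc n) \<and> \<xi> (Suc n) \<le> R 0 / sqrt c0"
proof -
  have E: "\<And>p. sqrt (energy \<Omega> lam c0 p) \<ge> sqrt c0"
    using energy_ge[OF lam] by simp
  have sc: "sqrt c0 > 0" using c0 by simp
  have R0: "R 0 > 0" using init_R E sc by (metis less_le_trans)
  have step: "\<And>n. R n > 0 \<Longrightarrow> 0 < R (Suc n) \<and> R (Suc n) \<le> R n"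
  proof -
    fix n assume "R n > 0"
    show "0 < R (Suc n) \<and> R (Suc n) \<le> R n"
      apply (rule step_lemma[where S="sqrt (energy \<Omega> lam c0 (\<phi> (Suc n)))" and dt=dt
            and I="integral \<Omega> (\<lambda>x. (norm (grad (\<mu> (Suc n)) x))^2)"])
      using \<open>R n > 0\<close> E[of "\<phi> (Suc n)"] sc dt eq_R eq_xi
      by (auto intro: integral_nonneg_any)
  qed
  have inv: "\<And>n. 0 < R n \<and> R n \<le> R 0"
  proof -
    fix n show "0 < R n \<and> R n \<le> R 0"
      by (induction n) (use R0 step in \<open>auto intro: order_trans\<close>)
  qed
  show ?thesis
  proof (intro allI)
    fix n
    have a: "0 < R (Suc n)" "R (Suc n) \<le> R n" "R n \<le> R 0" using step inv by auto
    have S: "sqrt (energy \<Omega> lam c0 (\<phi> (Suc n))) \<ge> sqrt c0" by (rule E)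
    have x: "\<xi> (Suc n) = R (Suc n) / sqrt (energy \<Omega> lam c0 (\<phi> (Suc n)))" using eq_xi by blast
    have "\<xi> (Suc n) > 0" using x a S sc by simp
    moreover have "\<xi> (Suc n) \<le> R 0 / sqrt c0"
    proof -
      have "R (Suc n) / sqrt (energy \<Omega> lam c0 (\<phi> (Suc n))) \<le> R (Suc n) / sqrt c0"
        using a S sc by (intro divide_left_mono) auto
      also have "\<dots> \<le> R 0 / sqrt c0" using a sc by (intro divide_right_mono) auto
      finally show ?thesis using x by simp
    qed
    ultimately show "0 < R (Suc n) \<and> R (Suc n) \<le> R n \<and> R n \<le> R 0
             \<and> 0 < \<xi> (Suc n) \<and> \<xi> (Suc n) \<le> R 0 / sqrt c0" using a by simp
  qed
qed

end
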